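(* Let $W$ be the Witt algebra with basis $\{x_n\mid n\in\mathbb{Z}\}$ and bracket $[x_m,x_n]=(n-m)x_{m+n}$, and let $V$ be a left-symmetric algebra structure on the underlying space of $W$ with product $x_mx_n=f(m,n)x_{m+n}$ for some $f:\mathbb{Z}\times\mathbb{Z}\to\mathbb{C}$ and with $x_mx_n-x_nx_m=(n-m)x_{m+n}$. Then $V$, regarded as a $W$-module via left multiplication, is indecomposable, i.e. it is not a direct sum of two proper submodules.
   Context: A left-symmetric algebra is a vector space with bilinear product satisfying $(xy)z-x(yz)=(yx)z-y(xz)$; left multiplication gives a representation of the commutator Lie algebra. *)

theory Defs
  imports Complex_Main
begin

text \<open>The underlying space of the Witt algebra: finitely supported functions
  v : int -> complex, v k being the coefficient of the basis vector x_k.\<close>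

definition fsupp :: "(int \<Rightarrow> complex) \<Rightarrow> bool" where
  "fsupp v \<longleftrightarrow> finite {k. v k \<noteq> 0}"

definition Vspace :: "(int \<Rightarrow> complex) set" where
  "Vspace = {v. fsupp v}"

text \<open>Basis-level conditions on the structure constants f, where x_m x_n = f m n x_(m+n).
  Left-symmetry: (x_a x_b) x_c - x_a (x_b x_c) = (x_b x_a) x_c - x_b (x_a x_c).\<close>

definition left_symmetric :: "(int \<Rightarrow> int \<Rightarrow> complex) \<Rightarrow> bool" where
  "left_symmetric f \<longleftrightarrow> (\<forall>a b c.
     f a b * f (a + b) c - f b c * f a (b + c) = f b a * f (a + b) c - f a c * f b (a + c))"

definition witt_commutator :: "(int \<Rightarrow> int \<Rightarrow> complex) \<Rightarrow> bool" where
  "witt_commutator f \<longleftrightarrow> (\<forall>m n. f m n - f n m = of_int (n - m))"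

text \<open>Left multiplication by the basis element x_m on v = sum_k v k x_k:
  x_m v = sum_j v j f m j x_(m+j).\<close>

definition lmult :: "(int \<Rightarrow> int \<Rightarrow> complex) \<Rightarrow> int \<Rightarrow> (int \<Rightarrow> complex) \<Rightarrow> (int \<Rightarrow> complex)" where
  "lmult f m v = (\<lambda>k. f m (k - m) * v (k - m))"

text \<open>W-submodule of V (W acting by left multiplication; by linearity it suffices
  to require closure under the action of the basis elements x_m).\<close>

definition is_submodule :: "(int \<Rightarrow> int \<Rightarrow> complex) \<Rightarrow> (int \<Rightarrow> complex) set \<Rightarrow> bool" where
  "is_submodule f U \<longleftrightarrow>
     U \<subseteq> Vspace \<and> (\<lambda>_. 0) \<in> U \<and>
     (\<forall>u\<in>U. \<forall>w\<in>U. (\<lambda>k. u k + w k) \<in> U) \<and>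
     (\<forall>c. \<forall>u\<in>U. (\<lambda>k. c * u k) \<in> U) \<and>
     (\<forall>m. \<forall>u\<in>U. lmult f m u \<in> U)"

definition indecomposable :: "(int \<Rightarrow> int \<Rightarrow> complex) \<Rightarrow> bool" where
  "indecomposable f \<longleftrightarrow> \<not> (\<exists>U1 U2.
     is_submodule f U1 \<and> is_submodule f U2 \<and>
     U1 \<noteq> Vspace \<and> U2 \<noteq> Vspace \<and>
     U1 \<inter> U2 = {\<lambda>_. 0} \<and>
     Vspace = {(\<lambda>k. u k + w k) | u w. u \<in> U1 \<and> w \<in> U2})"

end

theory Submission
  imports Defs
begin

lemma Rrel:
  assumes LS: "left_symmetric f" and C: "witt_commutator f"
  shows "of_int (b - a) * f (a+b) c = f b c * f a (b+c) - f a c * f b (a+c)"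
proof -
  have e1: "f a b * f (a + b) c - f b c * f a (b + c) = f b a * f (a + b) c - f a c * f b (a + c)"
    using LS unfolding left_symmetric_def by blast
  have e2: "of_int (b - a) = f a b - f b a" using C unfolding witt_commutator_def by metis
  have "of_int (b - a) * f (a+b) c = f a b * f (a + b) c - f b a * f (a + b) c"
    unfolding e2 by (rule left_diff_distrib)
  also have "\<dots> = f b c * f a (b + c) - f a c * f b (a + c)" using e1 by (simp add: algebra_simps)
  finally show ?thesis .
qed

lemma Cm:
  assumes C: "witt_commutator f"
  shows "f m n = f n m + of_int (n - m)"
  using C unfolding witt_commutator_def by (metis add_diff_cancel_left' diff_add_cancel)

lemma F3:
  assumes LS: "left_symmetric f" and C: "witt_commutator f"
  shows "f b 0 * (f b 0 - f 0 0) = 0"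
proof -
  have "f 0 b * f b 0 - f b 0 * f 0 b = f b 0 * f b 0 - f 0 0 * f b 0"
    using LS unfolding left_symmetric_def by (metis add.left_neutral add.right_neutral)
  then show ?thesis by (simp add: algebra_simps) auto
qed

lemma clos:
  assumes LS: "left_symmetric f" and C: "witt_commutator f"
  shows "f b c * (f c 0 - f (b+c) 0) = 0"
proof -
  have e: "f 0 b * f b c - f b c * f 0 (b + c) = f b 0 * f b c - f 0 c * f b c"
    using LS unfolding left_symmetric_def by (metis add.left_neutral)
  have "f 0 b = f b 0 + of_int b" using Cm[OF C, of 0 b] by simp
  moreover have "f 0 c = f c 0 + of_int c" using Cm[OF C, of 0 c] by simp
  moreover have "f 0 (b+c) = f (b+c) 0 + of_int (b+c)" using Cm[OF C, of 0 "b+c"] by simp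
  ultimately show ?thesis using e by (simp add: algebra_simps)
qed

lemma Rrel2:
  assumes LS: "left_symmetric f" and C: "witt_commutator f"
  shows "x = b - a \<Longrightarrow> p = a+b \<Longrightarrow> q = b+c \<Longrightarrow> r = a+c \<Longrightarrow> of_int x * f p c = f b c * f a q - f a c * f b r"
  using Rrel[OF LS C] by blast

lemma alg1:
  fixes J A v w :: complex
  assumes "J \<noteq> 0" "v = 3*J" "w = J" "2*J*w = A*v - p*y" "p = 0"
  shows "3*A = 2*J"
  using assms by algebra

lemma alg2:
  fixes J A E Cv F p q s t u v w x y z c :: complex
  assumes "J \<noteq> 0" "A \<noteq> 0" "t = -2*J" "u = -3*J" "x = -J + c" "F = E - 4*J"
   "-3*J*p = q*t - A*E" "2*J*x = t*z - Cv*u" "-3*J*t = Cv*F - s*p" "p = 0" "q = 0" "s = 0" "z = c"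
  shows "8*c = -5*J"
  using assms by algebra

lemma key:
  fixes f :: "int \<Rightarrow> int \<Rightarrow> complex" and j :: int
  assumes LS: "left_symmetric f" and C: "witt_commutator f"
   and j0: "j \<noteq> 0" and h1: "f j 0 = 0" and h2: "f (-j) 0 = f 0 0"
   and z1: "f (-j) j = 0" and z2: "f (-(2*j)) j = 0" and z3: "f (2*j) (-j) = 0"
  shows "8 * f 0 0 = -5 * of_int j \<and> f j j \<noteq> 0"
proof -
  define J where "J = (of_int j :: complex)"
  have J0: "J \<noteq> 0" using j0 J_def by simp
  have c1: "f j (-j) = -2*J" using Cm[OF C, of j "-j"] z1 by (simp add: J_def)
  have c2: "f j (-(2*j)) = -3*J" using Cm[OF C, of j "-(2*j)"] z2 by (simp add: J_def)
  have c3: "f (-j) (2*j) = 3*J" using Cm[OF C, of "-j" "2*j"] z3 by (simp add: J_def)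
  have c4: "f 0 j = J" using Cm[OF C, of 0 j] h1 by (simp add: J_def)
  have c5: "f 0 (-j) = -J + f 0 0" using Cm[OF C, of 0 "-j"] h2 by (simp add: J_def)
  have c6: "f (2*j) (-(2*j)) = f (-(2*j)) (2*j) - 4*J" using Cm[OF C, of "2*j" "-(2*j)"] by (simp add: J_def)
  have o2: "(of_int (2*j)::complex) = 2*J" by (simp add: J_def)
  have o3: "(of_int (-3*j)::complex) = -3*J" by (simp add: J_def)
  have r1: "of_int (2*j) * f 0 j = f j j * f (-j) (2*j) - f (-j) j * f j 0"
    by (rule Rrel2[OF LS C]) simp_all
  have r2: "of_int (-3*j) * f (-j) j = f (-(2*j)) j * f j (-j) - f j j * f (-(2*j)) (2*j)"
    by (rule Rrel2[OF LS C]) simp_all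
  have r3: "of_int (2*j) * f 0 (-j) = f j (-j) * f (-j) 0 - f (-j) (-j) * f j (-(2*j))"
    by (rule Rrel2[OF LS C]) simp_all
  have r4: "of_int (-3*j) * f j (-j) = f (-j) (-j) * f (2*j) (-(2*j)) - f (2*j) (-j) * f (-j) j"
    by (rule Rrel2[OF LS C]) simp_all
  have A: "3 * f j j = 2*J"
    by (rule alg1[OF J0 c3 c4 r1[unfolded o2 o3] z1])
  hence A0: "f j j \<noteq> 0" using J0 by auto
  have "8 * f 0 0 = -5*J"
    by (rule alg2[OF J0 A0 c1 c2 c5 c6 r2[unfolded o3] r3[unfolded o2] r4[unfolded o3] z1 z2 z3 h2])
  thus ?thesis using A0 J_def by simp
qed

lemma clos2:
  assumes LS: "left_symmetric f" and C: "witt_commutator f"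
  shows "d = b + c \<Longrightarrow> f c 0 \<noteq> f d 0 \<Longrightarrow> f b c = 0"
  using clos[OF LS C, of b c] by auto

lemma Lj:
  fixes f :: "int \<Rightarrow> int \<Rightarrow> complex"
  assumes LS: "left_symmetric f" and C: "witt_commutator f"
   and c0: "f 0 0 \<noteq> 0" and h: "f j 0 = 0"
  shows "8 * f 0 0 = -5 * of_int j \<and> f (2*j) 0 = 0"
proof -
  have j0: "j \<noteq> 0" using c0 h by auto
  have r: "of_int (2*j) * f 0 0 = f j 0 * f (-j) j - f (-j) 0 * f j (-j)"
    by (rule Rrel2[OF LS C]) simp_all
  have hm: "f (-j) 0 = f 0 0"
  proof (rule ccontr)
    assume "f (-j) 0 \<noteq> f 0 0"
    hence m: "f (-j) 0 = 0" using F3[OF LS C, of "-j"] by auto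
    have "of_int (2*j) * f 0 0 = 0" using r unfolding h m by (simp only: mult_zero_left diff_zero)
    moreover have "(of_int (2*j) :: complex) \<noteq> 0" using j0 by simp
    ultimately show False using c0 by simp
  qed
  have z1: "f (-j) j = 0" by (rule clos2[OF LS C]) (use h c0 in simp_all)
  have z2: "f (-(2*j)) j = 0" by (rule clos2[OF LS C, of "-j"]) (use h hm c0 in simp_all)
  have z3: "f (2*j) (-j) = 0" by (rule clos2[OF LS C, of j]) (use h hm c0 in simp_all)
  have k: "8 * f 0 0 = -5 * of_int j \<and> f j j \<noteq> 0"
    by (rule key[OF LS C j0 h hm z1 z2 z3])
  have "f (2*j) 0 = 0"
  proof (rule ccontr)
    assume "f (2*j) 0 \<noteq> 0"
    hence "f j j = 0" by (intro clos2[OF LS C, of "2*j"]) (use h in simp_all)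
    thus False using k by simp
  qed
  thus ?thesis using k by simp
qed

lemma hconst:
  fixes f :: "int \<Rightarrow> int \<Rightarrow> complex"
  assumes LS: "left_symmetric f" and C: "witt_commutator f"
  shows "f n 0 = f 0 0"
proof (rule ccontr)
  assume a: "f n 0 \<noteq> f 0 0"
  hence h: "f n 0 = 0" using F3[OF LS C, of n] by auto
  hence c0: "f 0 0 \<noteq> 0" using a by simp
  have 1: "8 * f 0 0 = -5 * of_int n" and h2: "f (2*n) 0 = 0" using Lj[OF LS C c0 h] by auto
  have 2: "8 * f 0 0 = -5 * of_int (2*n)" using Lj[OF LS C c0 h2] by auto
  from 1 2 have "n = 0" by simp
  thus False using a by simp
qed

definition bas :: "int \<Rightarrow> int \<Rightarrow> complex" where
  "bas n = (\<lambda>i. if i = n then 1 else 0)"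

lemma lmult_bas: "lmult f m (bas n) = (\<lambda>i. f m n * bas (m+n) i)"
  unfolding lmult_def bas_def by (rule ext) auto

lemma sm_scale: "is_submodule f U \<Longrightarrow> u \<in> U \<Longrightarrow> (\<lambda>k. c * u k) \<in> U"
  unfolding is_submodule_def by blast
lemma sm_add: "is_submodule f U \<Longrightarrow> u \<in> U \<Longrightarrow> w \<in> U \<Longrightarrow> (\<lambda>k. u k + w k) \<in> U"
  unfolding is_submodule_def by blast
lemma sm_lmult: "is_submodule f U \<Longrightarrow> u \<in> U \<Longrightarrow> lmult f m u \<in> U"
  unfolding is_submodule_def by blast
lemma sm_zero: "is_submodule f U \<Longrightarrow> (\<lambda>_. 0) \<in> U"
  unfolding is_submodule_def by blast
lemma sm_V: "is_submodule f U \<Longrightarrow> U \<subseteq> Vspace"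
  unfolding is_submodule_def by blast

lemma all_bas:
  assumes sm: "is_submodule f U" and b: "\<And>n. bas n \<in> U"
  shows "U = Vspace"
proof
  show "U \<subseteq> Vspace" using sm_V[OF sm] .
  have "\<And>S. finite S \<Longrightarrow> \<forall>v. {k. v k \<noteq> 0} \<subseteq> S \<longrightarrow> v \<in> U"
  proof -
    fix S :: "int set"
    assume "finite S"
    then show "\<forall>v. {k. v k \<noteq> 0} \<subseteq> S \<longrightarrow> v \<in> U"
    proof (induction S rule: finite_induct)
      case empty
      show ?case
      proof (intro allI impI)
        fix v :: "int \<Rightarrow> complex" assume "{k. v k \<noteq> 0} \<subseteq> {}"
        hence "v = (\<lambda>_. 0)" by auto
        thus "v \<in> U" using sm_zero[OF sm] by simp
      qed
    next
      case (insert a S)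
      show ?case
      proof (intro allI impI)
        fix v :: "int \<Rightarrow> complex" assume s: "{k. v k \<noteq> 0} \<subseteq> insert a S"
        define v' where "v' = (\<lambda>k. if k = a then 0 else v k)"
        have "{k. v' k \<noteq> 0} \<subseteq> S" using s unfolding v'_def by auto
        hence v'U: "v' \<in> U" using insert.IH by blast
        have "(\<lambda>k. v a * bas a k) \<in> U" using sm_scale[OF sm b] .
        hence "(\<lambda>k. v a * bas a k + v' k) \<in> U" using sm_add[OF sm _ v'U] by blast
        moreover have "(\<lambda>k. v a * bas a k + v' k) = v" unfolding v'_def bas_def by (rule ext) auto
        ultimately show "v \<in> U" by simp
      qed
    qed
  qed
  then show "Vspace \<subseteq> U" unfolding Vspace_def fsupp_def by blast
qed

lemma disj0:
  assumes "X \<inter> Y = {\<lambda>_. 0}" "v \<in> X" "v \<in> Y" shows "v = (\<lambda>_. 0)"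
  using assms by blast

lemma closure0:
  assumes sX: "is_submodule f X" and sY: "is_submodule f Y" and d: "X \<inter> Y = {\<lambda>_. 0}"
    and a: "bas a \<in> X" and b: "bas (m+a) \<in> Y"
  shows "f m a = 0"
proof -
  have "lmult f m (bas a) \<in> X" using sm_lmult[OF sX a] .
  moreover have "lmult f m (bas a) \<in> Y" unfolding lmult_bas using sm_scale[OF sY b] .
  ultimately have "lmult f m (bas a) = (\<lambda>_. 0)" using disj0[OF d] by blast
  hence "lmult f m (bas a) (m+a) = 0" by simp
  thus ?thesis by (simp add: lmult_def bas_def)
qed

lemma weight:
  assumes s1: "is_submodule f U1" and s2: "is_submodule f U2" and d: "U1 \<inter> U2 = {\<lambda>_. 0}"
    and dec: "bas n = (\<lambda>k. u k + w k)" and u: "u \<in> U1" and w: "w \<in> U2"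
    and g: "\<And>k. f 0 k = of_int k + c"
  shows "bas n \<in> U1 \<or> bas n \<in> U2"
proof -
  define d1 where "d1 = (\<lambda>k. lmult f 0 u k + (- f 0 n) * u k)"
  define d2 where "d2 = (\<lambda>k. lmult f 0 w k + (- f 0 n) * w k)"
  have d1U: "d1 \<in> U1" unfolding d1_def by (rule sm_add[OF s1 sm_lmult[OF s1 u] sm_scale[OF s1 u]])
  have d2U: "d2 \<in> U2" unfolding d2_def by (rule sm_add[OF s2 sm_lmult[OF s2 w] sm_scale[OF s2 w]])
  have "\<And>k. d1 k = (-1) * d2 k"
  proof -
    fix k
    have "u k + w k = bas n k" using dec by metis
    hence "(f 0 k - f 0 n) * (u k + w k) = 0" unfolding bas_def by (cases "k = n") auto
    thus "d1 k = (-1) * d2 k" unfolding d1_def d2_def lmult_def by (simp add: algebra_simps)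
  qed
  hence "d1 = (\<lambda>k. (-1) * d2 k)" by (rule ext)
  hence "d1 \<in> U2" using sm_scale[OF s2 d2U, of "-1"] by simp
  hence "d1 = (\<lambda>_. 0)" using disj0[OF d d1U] by simp
  hence uz: "\<And>k. k \<noteq> n \<Longrightarrow> u k = 0"
  proof -
    fix k assume "d1 = (\<lambda>_. 0)" "k \<noteq> n"
    hence "(f 0 k - f 0 n) * u k = 0" unfolding d1_def lmult_def by (metis (no_types, lifting) add.commute diff_0_right diff_conv_add_uminus mult.commute mult_minus_left ring_class.ring_distribs(1))
    moreover have "f 0 k - f 0 n \<noteq> 0" using g[of k] g[of n] \<open>k \<noteq> n\<close> by simp
    ultimately show "u k = 0" by simp
  qed
  have sum_n: "u n + w n = 1" using dec by (metis bas_def)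
  show ?thesis
  proof (cases "u n = 0")
    case True
    have "w = bas n"
    proof
      fix k show "w k = bas n k"
        using dec uz sum_n True by (metis add_0 bas_def)
    qed
    thus ?thesis using w by simp
  next
    case False
    have "bas n = (\<lambda>k. (1 / u n) * u k)"
    proof
      fix k show "bas n k = (1 / u n) * u k"
        using uz False unfolding bas_def by (cases "k = n") auto
    qed
    moreover have "(\<lambda>k. (1 / u n) * u k) \<in> U1" by (rule sm_scale[OF s1 u])
    ultimately show ?thesis by simp
  qed
qed


lemma core:
  fixes f :: "int \<Rightarrow> int \<Rightarrow> complex"
  assumes LS: "left_symmetric f" and C: "witt_commutator f"
    and s1: "is_submodule f U1" and s2: "is_submodule f U2" and d: "U1 \<inter> U2 = {\<lambda>_. 0}"
    and ne: "U1 \<noteq> Vspace" and each: "\<And>n. bas n \<in> U1 \<or> bas n \<in> U2"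
    and b0: "bas 0 \<in> U1" and hc: "\<And>n. f n 0 = f 0 0"
  shows False
proof -
  obtain j where j1: "bas j \<notin> U1" using all_bas[OF s1] ne by blast
  hence j2: "bas j \<in> U2" using each by blast
  have j0: "j \<noteq> 0" using j1 b0 by auto
  show False
  proof (cases "f 0 0 = 0")
    case False
    have "lmult f j (bas 0) \<in> U1" using sm_lmult[OF s1 b0] .
    hence "(\<lambda>i. f 0 0 * bas j i) \<in> U1" unfolding lmult_bas using hc[of j] by simp
    hence "(\<lambda>k. (1 / f 0 0) * (f 0 0 * bas j k)) \<in> U1" by (rule sm_scale[OF s1])
    hence "bas j \<in> U1" using False by simp
    thus False using j1 by simp
  next
    case True
    have d': "U2 \<inter> U1 = {\<lambda>_. 0}" using d by blast
    have "bas (-j + j) \<in> U1" using b0 by simp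
    hence z1: "f (-j) j = 0" by (rule closure0[OF s2 s1 d' j2])
    have m1: "bas (-j) \<in> U1"
    proof (rule ccontr)
      assume "bas (-j) \<notin> U1"
      hence "bas (-j) \<in> U2" using each by blast
      moreover have "bas (j + -j) \<in> U1" using b0 by simp
      ultimately have "f j (-j) = 0" by (rule closure0[OF s2 s1 d'])
      moreover have "f j (-j) = f (-j) j + of_int (-j - j)" by (rule Cm[OF C])
      ultimately have "of_int (-j - j) = (0::complex)" using z1 by simp
      thus False using j0 by simp
    qed
    have "-(2*j) + j = -j" by simp
    hence "bas (-(2*j) + j) \<in> U1" using m1 by simp
    hence z2: "f (-(2*j)) j = 0" by (rule closure0[OF s2 s1 d' j2])
    have "2*j + -j = j" by simp
    hence "bas (2*j + -j) \<in> U2" using j2 by simp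
    hence z3: "f (2*j) (-j) = 0" by (rule closure0[OF s1 s2 d m1])
    have "8 * f 0 0 = -5 * of_int j \<and> f j j \<noteq> 0"
      by (rule key[OF LS C j0]) (use hc True z1 z2 z3 in auto)
    thus False using True j0 by simp
  qed
qed

theorem lemma3p3:
  fixes f :: "int \<Rightarrow> int \<Rightarrow> complex"
  assumes "left_symmetric f"
    and "witt_commutator f"
  shows "indecomposable f"
  unfolding indecomposable_def
proof (rule notI, elim exE conjE)
  fix U1 U2
  assume s1: "is_submodule f U1" and s2: "is_submodule f U2"
    and n1: "U1 \<noteq> Vspace" and n2: "U2 \<noteq> Vspace" and d: "U1 \<inter> U2 = {\<lambda>_. 0}"
    and V: "Vspace = {(\<lambda>k. u k + w k) | u w. u \<in> U1 \<and> w \<in> U2}"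
  have hc: "\<And>n. f n 0 = f 0 0" using hconst[OF assms] .
  have g: "\<And>k. f 0 k = of_int k + f 0 0"
  proof -
    fix k
    have "f 0 k = f k 0 + of_int (k - 0)" by (rule Cm[OF assms(2)])
    thus "f 0 k = of_int k + f 0 0" using hc[of k] by simp
  qed
  have bV: "\<And>n. bas n \<in> Vspace" unfolding Vspace_def fsupp_def bas_def by simp
  have each: "\<And>n. bas n \<in> U1 \<or> bas n \<in> U2"
  proof -
    fix n
    have "bas n \<in> {(\<lambda>k. u k + w k) | u w. u \<in> U1 \<and> w \<in> U2}" using bV[of n] V by simp
    then obtain u w where "bas n = (\<lambda>k. u k + w k)" "u \<in> U1" "w \<in> U2" by blast
    thus "bas n \<in> U1 \<or> bas n \<in> U2" using weight[OF s1 s2 d _ _ _ g] by blast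
  qed
  show False
  proof (cases "bas 0 \<in> U1")
    case True
    show False by (rule core[OF assms s1 s2 d n1 each True hc])
  next
    case False
    hence b0: "bas 0 \<in> U2" using each by blast
    have d': "U2 \<inter> U1 = {\<lambda>_. 0}" using d by blast
    have each': "\<And>n. bas n \<in> U2 \<or> bas n \<in> U1" using each by blast
    show False by (rule core[OF assms s2 s1 d' n2 each' b0 hc])
  qed
qed

end
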